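(* Let $G$ and $H$ be finite groups, $U\leq G\times H$ a subdirect product, and $A$ an abelian group satisfying the Hypothesis for a set of primes $\pi$ which contains every prime divisor of $|G|$ and $|H|$. Then the natural restriction map $\rho:\mathrm{Hom}(G\times H,A)\to\mathrm{Hom}(U,A)$ is surjective if and only if $G'\cap k_1(U)=k_1(U')$, or equivalently if and only if $H'\cap k_2(U)=k_2(U')$.
   Context: For $U\leq G\times H$: $p_1(U)=\{g:\exists h,(g,h)\in U\}$, $p_2(U)=\{h:\exists g,(g,h)\in U\}$, $k_1(U)=\{g:(g,1)\in U\}$, $k_2(U)=\{h:(1,h)\in U\}$; $U$ is a subdirect product if $p_1(U)=G$, $p_2(U)=H$. $X'$ denotes the commutator subgroup of a group $X$. An abelian group $A$ satisfies the Hypothesis (with set of primes $\pi$) if there is a unique set of primes $\pi$ such that for every $n\in\mathbb{N}$ the $n$-torsion part of $A$ is cyclic of order $n_\pi$ (the $\pi$-part of $n$). *)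

theory Defs
  imports "HOL-Algebra.Algebra" "HOL-Computational_Algebra.Primes"
begin

definition pi_part :: "nat set \<Rightarrow> nat \<Rightarrow> nat" where
  "pi_part \<pi> n = (\<Prod>p\<in>prime_factors n \<inter> \<pi>. p ^ multiplicity p n)"

definition torsion_part :: "('a, 'b) monoid_scheme \<Rightarrow> nat \<Rightarrow> 'a set" where
  "torsion_part A n = {a \<in> carrier A. a [^]\<^bsub>A\<^esub> n = \<one>\<^bsub>A\<^esub>}"

definition satisfies_hypothesis :: "('a, 'b) monoid_scheme \<Rightarrow> nat set \<Rightarrow> bool" where
  "satisfies_hypothesis A \<pi> \<longleftrightarrow> (\<forall>p\<in>\<pi>. Factorial_Ring.prime p) \<and>
     (\<forall>n::nat. n \<ge> 1 \<longrightarrow>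
        cyclic_group (A\<lparr>carrier := torsion_part A n\<rparr>) \<and>
        card (torsion_part A n) = pi_part \<pi> n)"

definition k1 :: "('b, 'c) monoid_scheme \<Rightarrow> ('a \<times> 'b) set \<Rightarrow> 'a set" where
  "k1 H U = {g. (g, \<one>\<^bsub>H\<^esub>) \<in> U}"

definition k2 :: "('a, 'c) monoid_scheme \<Rightarrow> ('a \<times> 'b) set \<Rightarrow> 'b set" where
  "k2 G U = {h. (\<one>\<^bsub>G\<^esub>, h) \<in> U}"

definition subdirect :: "('a, 'c) monoid_scheme \<Rightarrow> ('b, 'd) monoid_scheme \<Rightarrow> ('a \<times> 'b) set \<Rightarrow> bool" where
  "subdirect G H U \<longleftrightarrow> subgroup U (G \<times>\<times> H) \<and> fst ` U = carrier G \<and> snd ` U = carrier H"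

definition restriction_surjective ::
  "('a, 'c) monoid_scheme \<Rightarrow> ('b, 'd) monoid_scheme \<Rightarrow> ('a \<times> 'b) set \<Rightarrow> ('e, 'f) monoid_scheme \<Rightarrow> bool" where
  "restriction_surjective G H U A \<longleftrightarrow>
     (\<forall>f \<in> hom ((G \<times>\<times> H)\<lparr>carrier := U\<rparr>) A.
        \<exists>F \<in> hom (G \<times>\<times> H) A. \<forall>u\<in>U. F u = f u)"

end

theory Submission
  imports Defs
begin

definition pinum :: "nat set \<Rightarrow> nat \<Rightarrow> bool" where
  "pinum \<pi> n \<longleftrightarrow> n > 0 \<and> (\<forall>p. Factorial_Ring.prime p \<longrightarrow> p dvd n \<longrightarrow> p \<in> \<pi>)"

lemma pinum_pi_part: "pinum \<pi> n \<Longrightarrow> pi_part \<pi> n = n"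
proof -
  assume a: "pinum \<pi> n"
  hence "prime_factors n \<inter> \<pi> = prime_factors n"
    unfolding pinum_def by (auto simp: prime_factors_dvd)
  thus ?thesis using a unfolding pi_part_def pinum_def
    by (metis prime_factorization_nat)
qed

lemma pinum_dvd: "pinum \<pi> n \<Longrightarrow> m dvd n \<Longrightarrow> pinum \<pi> m"
  unfolding pinum_def by (metis dvd_trans gr0I dvd_0_left_iff)

lemma (in comm_group) torsion_subgroup:
  shows "subgroup (torsion_part G n) G"
proof -
  show ?thesis
    unfolding torsion_part_def
    by (rule subgroupI) (auto simp: pow_mult_distrib m_comm nat_pow_inv)
qed

lemma (in comm_group) root_exists:
  assumes hyp: "satisfies_hypothesis G \<pi>"
    and n: "pinum \<pi> n" and mn: "m dvd n" and x: "x \<in> carrier G"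
    and xp: "x [^] (n div m) = \<one>"
  shows "\<exists>a\<in>carrier G. a [^] m = x"
proof -
  define T where "T = torsion_part G n"
  have n1: "n \<ge> 1" using n unfolding pinum_def by simp
  have cyc: "cyclic_group (G\<lparr>carrier := T\<rparr>)" and cardT: "card T = n"
    using hyp n1 pinum_pi_part[OF n] unfolding satisfies_hypothesis_def T_def by auto
  have sub: "subgroup T G" unfolding T_def using torsion_subgroup .
  interpret TG: group "G\<lparr>carrier := T\<rparr>" using subgroup.subgroup_is_group[OF sub] is_group by blast
  obtain g where g: "g \<in> T" and Tr: "T = range (\<lambda>k::int. g [^]\<^bsub>G\<lparr>carrier := T\<rparr>\<^esub> k)"
    using cyc TG.cyclic_group by auto
  have Tr2: "T = range (\<lambda>k::int. g [^] k)"
    using Tr int_pow_consistent[OF sub g] by simp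
  have gA: "g \<in> carrier G" using g sub subgroup.subset by blast
  have "generate G {g} = T"
    using generate_pow[OF gA] Tr2 by auto
  hence ordg: "ord g = n" using generate_pow_card[OF gA] cardT by simp
  have m0: "m > 0" using mn n unfolding pinum_def by auto
  have nm: "n = m * (n div m)" using mn by simp
  have "x [^] n = \<one>" using xp x nm by (metis nat_pow_one nat_pow_pow mult.commute)
  hence "x \<in> T" using x unfolding T_def torsion_part_def by simp
  then obtain j where j: "x = g [^] (j::int)" using Tr2 by auto
  have "g [^] (j * int (n div m)) = \<one>"
    using xp j by (simp add: int_pow_pow[OF gA, symmetric] int_pow_int[symmetric])
  hence "int n dvd j * int (n div m)" using int_pow_eq_id[OF gA] ordg by simp
  hence "int m * int (n div m) dvd j * int (n div m)" using nm by (metis of_nat_mult)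
  hence "int m dvd j" using n m0 nm
    by (metis mult_cancel_right mult_eq_0_iff dvd_mult_cancel_right of_nat_eq_0_iff gr_implies_not0 pinum_def)
  then obtain t where t: "j = int m * t" by auto
  show ?thesis
  proof (intro bexI)
    show "(g [^] t) [^] m = x"
      using j t gA by (simp add: int_pow_int[symmetric] int_pow_pow mult.commute)
  qed (use gA in simp)
qed

lemma (in comm_group) nontrivial_root:
  assumes hyp: "satisfies_hypothesis G \<pi>"
    and m: "pinum \<pi> m" and m1: "m > 1"
  shows "\<exists>a\<in>carrier G. a [^] m = \<one> \<and> a \<noteq> \<one>"
proof -
  have "card (torsion_part G m) = m"
    using hyp m1 pinum_pi_part[OF m] unfolding satisfies_hypothesis_def by auto
  hence "torsion_part G m \<noteq> {\<one>}" using m1 by auto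
  moreover have "\<one> \<in> torsion_part G m" unfolding torsion_part_def by simp
  ultimately obtain a where "a \<in> torsion_part G m" "a \<noteq> \<one>" by blast
  thus ?thesis unfolding torsion_part_def by auto
qed


lemma (in group) inv_cancel_l1: "x \<in> carrier G \<Longrightarrow> y \<in> carrier G \<Longrightarrow> inv x \<otimes> (x \<otimes> y) = y"
  by (simp add: m_assoc[symmetric])
lemma (in group) inv_cancel_l2: "x \<in> carrier G \<Longrightarrow> y \<in> carrier G \<Longrightarrow> x \<otimes> (inv x \<otimes> y) = y"
  by (simp add: m_assoc[symmetric])

lemma derived_img:
  assumes "group_hom G H h" and K: "K \<subseteq> carrier G"
  shows "h ` derived G K = derived H (h ` K)"
proof -
  interpret group_hom G H h by fact
  have dc: "derived_set G K \<subseteq> carrier G" using G.derived_set_in_carrier[OF K] .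
  have "h ` derived_set G K = derived_set H (h ` K)"
  proof
    show "h ` derived_set G K \<subseteq> derived_set H (h ` K)"
    proof
      fix z assume "z \<in> h ` derived_set G K"
      then obtain x y where xy: "x \<in> K" "y \<in> K" "z = h (x \<otimes>\<^bsub>G\<^esub> y \<otimes>\<^bsub>G\<^esub> inv\<^bsub>G\<^esub> x \<otimes>\<^bsub>G\<^esub> inv\<^bsub>G\<^esub> y)" by blast
      hence "z = h x \<otimes>\<^bsub>H\<^esub> h y \<otimes>\<^bsub>H\<^esub> inv\<^bsub>H\<^esub> h x \<otimes>\<^bsub>H\<^esub> inv\<^bsub>H\<^esub> h y"
        using K by (auto simp: subsetD)
      thus "z \<in> derived_set H (h ` K)" using xy by blast
    qed
  next
    show "derived_set H (h ` K) \<subseteq> h ` derived_set G K"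
    proof
      fix z assume "z \<in> derived_set H (h ` K)"
      then obtain x y where xy: "x \<in> K" "y \<in> K" "z = h x \<otimes>\<^bsub>H\<^esub> h y \<otimes>\<^bsub>H\<^esub> inv\<^bsub>H\<^esub> h x \<otimes>\<^bsub>H\<^esub> inv\<^bsub>H\<^esub> h y" by blast
      hence "z = h (x \<otimes>\<^bsub>G\<^esub> y \<otimes>\<^bsub>G\<^esub> inv\<^bsub>G\<^esub> x \<otimes>\<^bsub>G\<^esub> inv\<^bsub>G\<^esub> y)"
        using K by (auto simp: subsetD)
      thus "z \<in> h ` derived_set G K" using xy by blast
    qed
  qed
  thus ?thesis unfolding derived_def using generate_img[OF dc] by simp
qed

lemma hom_kills_derived:
  assumes "group C" "comm_group A" "F \<in> hom C A" "x \<in> derived C (carrier C)"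
  shows "F x = \<one>\<^bsub>A\<^esub>"
proof -
  interpret A: comm_group A by fact
  have gh: "group_hom C A F" using assms by (simp add: group_hom_def group_hom_axioms_def comm_group.axioms)
  have "F ` derived C (carrier C) = derived A (F ` carrier C)"
    using derived_img[OF gh] by simp
  also have "\<dots> = {\<one>\<^bsub>A\<^esub>}" using A.derived_eq_singleton hom_carrier[OF assms(3)] by simp
  finally show ?thesis using assms(4) by auto
qed

lemma (in group) least_pow_mem:
  assumes fin: "finite (carrier G)" and B: "subgroup B G" and c: "c \<in> carrier G"
  shows "\<exists>m>0. \<forall>k::int. c [^] k \<in> B \<longleftrightarrow> int m dvd k"
proof -
  define S where "S = {k::nat. 0 < k \<and> c [^] k \<in> B}"
  have "ord c \<in> S" using ord_ge_1[OF fin c] c subgroup.one_closed[OF B] unfolding S_def by auto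
  define m where "m = (LEAST k. k \<in> S)"
  have mS: "m \<in> S" unfolding m_def using \<open>ord c \<in> S\<close> by (rule LeastI)
  have mmin: "\<And>k. k \<in> S \<Longrightarrow> m \<le> k" unfolding m_def by (rule Least_le)
  have cm: "c [^] (int m) \<in> B" using mS unfolding S_def by (simp add: int_pow_int)
  show ?thesis
  proof (intro exI conjI allI iffI)
    show "m > 0" using mS unfolding S_def by simp
    fix k :: int
    { assume "int m dvd k"
      then obtain t where "k = int m * t" by auto
      hence "c [^] k = (c [^] (int m)) [^] t" using c by (simp add: int_pow_pow)
      thus "c [^] k \<in> B" using subgroup_int_pow_closed[OF B cm] by simp }
    assume ck: "c [^] k \<in> B"
    define r where "r = k mod int m"
    have r0: "r \<ge> 0" "r < int m" unfolding r_def using \<open>m > 0\<close> by auto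
    have "k = int m * (k div int m) + r" unfolding r_def by simp
    hence "c [^] k = (c [^] (int m)) [^] (k div int m) \<otimes> c [^] r"
      using c by (metis int_pow_mult int_pow_pow)
    hence "c [^] r = inv ((c [^] (int m)) [^] (k div int m)) \<otimes> c [^] k"
      using c by (simp add: inv_cancel_l1)
    hence "c [^] r \<in> B"
      using ck subgroup_int_pow_closed[OF B cm] B by (simp add: subgroup.m_closed subgroup.m_inv_closed)
    hence "c [^] (nat r) \<in> B" using r0 by (simp add: pow_nat)
    hence "nat r = 0"
      using mmin[of "nat r"] r0 unfolding S_def by (cases "nat r = 0") auto
    hence "r = 0" using r0 by simp
    thus "int m dvd k" unfolding r_def by auto
  qed
qed


lemma (in group) step_ext:
  assumes A: "comm_group A" and B: "subgroup B G" and DB: "derived G (carrier G) \<subseteq> B"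
    and phi: "\<phi> \<in> hom (G\<lparr>carrier := B\<rparr>) A"
    and kill: "\<forall>d\<in>derived G (carrier G). \<phi> d = \<one>\<^bsub>A\<^esub>"
    and c: "c \<in> carrier G" and md: "\<forall>k::int. c [^] k \<in> B \<longleftrightarrow> int m dvd k"
    and a: "a \<in> carrier A" and am: "a [^]\<^bsub>A\<^esub> m = \<phi> (c [^] m)"
  shows "\<exists>B2 \<phi>2. subgroup B2 G \<and> B \<subseteq> B2 \<and> c \<in> B2 \<and> \<phi>2 \<in> hom (G\<lparr>carrier := B2\<rparr>) A
           \<and> (\<forall>b\<in>B. \<phi>2 b = \<phi> b) \<and> \<phi>2 c = a"
proof -
  interpret A: comm_group A by fact
  have BG: "group (G\<lparr>carrier := B\<rparr>)" using subgroup.subgroup_is_group[OF B is_group] .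
  interpret P: group_hom "G\<lparr>carrier := B\<rparr>" A \<phi>
    using BG A.is_group phi by (simp add: group_hom_def group_hom_axioms_def)
  have Bc: "\<And>x. x \<in> B \<Longrightarrow> x \<in> carrier G" using B subgroup.subset by blast
  have pm: "\<And>x y. x\<in>B \<Longrightarrow> y\<in>B \<Longrightarrow> \<phi> (x \<otimes> y) = \<phi> x \<otimes>\<^bsub>A\<^esub> \<phi> y"
    using P.hom_mult by simp
  have pc: "\<And>x. x\<in>B \<Longrightarrow> \<phi> x \<in> carrier A" using P.hom_closed by simp
  have p1: "\<phi> \<one> = \<one>\<^bsub>A\<^esub>" using P.hom_one by simp
  have pinv: "\<And>x. x\<in>B \<Longrightarrow> \<phi> (inv x) = inv\<^bsub>A\<^esub> \<phi> x"
    using P.hom_inv m_inv_consistent[OF B] by simp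
  have ppow: "\<And>x (k::int). x\<in>B \<Longrightarrow> \<phi> (x [^] k) = \<phi> x [^]\<^bsub>A\<^esub> k"
    using P.hom_int_pow int_pow_consistent[OF B] by simp
  have conj: "y \<otimes> b \<otimes> inv y \<in> B \<and> \<phi> (y \<otimes> b \<otimes> inv y) = \<phi> b"
    if y: "y \<in> carrier G" and b: "b \<in> B" for y b
  proof -
    define z where "z = y \<otimes> b \<otimes> inv y \<otimes> inv b"
    have "z \<in> derived_set G (carrier G)" unfolding z_def using y Bc[OF b] by blast
    hence zd: "z \<in> derived G (carrier G)" unfolding derived_def by (rule generate.incl)
    have zB: "z \<in> B" using zd DB by blast
    have eq: "y \<otimes> b \<otimes> inv y = z \<otimes> b" unfolding z_def using y Bc[OF b] by (simp add: m_assoc)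
    show ?thesis using eq zB b kill zd pm pc
      by (simp add: subgroup.m_closed[OF B])
  qed
  have cmB: "c [^] (int m) \<in> B" using md by simp
  have wd: "\<phi> b \<otimes>\<^bsub>A\<^esub> a [^]\<^bsub>A\<^esub> k = \<phi> b' \<otimes>\<^bsub>A\<^esub> a [^]\<^bsub>A\<^esub> k'"
    if b: "b \<in> B" and b': "b' \<in> B" and eq: "b \<otimes> c [^] k = b' \<otimes> c [^] k'" for b b' and k k' :: int
  proof -
    have "inv b' \<otimes> b = c [^] k' \<otimes> inv (c [^] k)"
      using eq b b' Bc c by (metis inv_solve_left inv_solve_right' m_assoc int_pow_closed inv_closed m_closed)
    hence e2: "inv b' \<otimes> b = c [^] (k' - k)" using c by (simp add: int_pow_diff)
    hence "c [^] (k' - k) \<in> B" using b b' B by (metis subgroup.m_closed subgroup.m_inv_closed)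
    then obtain t where t: "k' - k = int m * t" using md by blast
    have "\<phi> (inv b' \<otimes> b) = \<phi> ((c [^] (int m)) [^] t)" using e2 t c by (simp add: int_pow_pow)
    also have "\<dots> = (a [^]\<^bsub>A\<^esub> (int m)) [^]\<^bsub>A\<^esub> t" using ppow[OF cmB] am by (simp add: int_pow_int)
    also have "\<dots> = a [^]\<^bsub>A\<^esub> (k' - k)" using t a by (simp add: A.int_pow_pow)
    finally have e3: "inv\<^bsub>A\<^esub> \<phi> b' \<otimes>\<^bsub>A\<^esub> \<phi> b = a [^]\<^bsub>A\<^esub> (k' - k)"
      using pm pinv b b' B by (simp add: subgroup.m_inv_closed)
    hence "\<phi> b = \<phi> b' \<otimes>\<^bsub>A\<^esub> a [^]\<^bsub>A\<^esub> (k' - k)"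
      using pc b b' a by (metis A.inv_solve_left' A.int_pow_closed)
    hence "\<phi> b \<otimes>\<^bsub>A\<^esub> a [^]\<^bsub>A\<^esub> k = \<phi> b' \<otimes>\<^bsub>A\<^esub> (a [^]\<^bsub>A\<^esub> (k' - k) \<otimes>\<^bsub>A\<^esub> a [^]\<^bsub>A\<^esub> k)"
      using pc b b' a by (simp add: A.m_assoc)
    also have "a [^]\<^bsub>A\<^esub> (k' - k) \<otimes>\<^bsub>A\<^esub> a [^]\<^bsub>A\<^esub> k = a [^]\<^bsub>A\<^esub> k'"
      using a by (simp add: A.int_pow_mult[symmetric])
    finally show ?thesis .
  qed
  define B2 where "B2 = {x. \<exists>b\<in>B. \<exists>k::int. x = b \<otimes> c [^] k}"
  define \<phi>2 where "\<phi>2 x = (SOME z. \<exists>b\<in>B. \<exists>k::int. x = b \<otimes> c [^] k \<and> z = \<phi> b \<otimes>\<^bsub>A\<^esub> a [^]\<^bsub>A\<^esub> k)" for x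
  have p2eq: "\<phi>2 (b \<otimes> c [^] k) = \<phi> b \<otimes>\<^bsub>A\<^esub> a [^]\<^bsub>A\<^esub> k" if b: "b \<in> B" for b and k :: int
    unfolding \<phi>2_def
  proof (rule someI2)
    show "\<exists>b'\<in>B. \<exists>k'::int. b \<otimes> c [^] k = b' \<otimes> c [^] k' \<and> \<phi> b \<otimes>\<^bsub>A\<^esub> a [^]\<^bsub>A\<^esub> k = \<phi> b' \<otimes>\<^bsub>A\<^esub> a [^]\<^bsub>A\<^esub> k'"
      using b by blast
  next
    fix z assume "\<exists>b'\<in>B. \<exists>k'::int. b \<otimes> c [^] k = b' \<otimes> c [^] k' \<and> z = \<phi> b' \<otimes>\<^bsub>A\<^esub> a [^]\<^bsub>A\<^esub> k'"
    then obtain b' and k' :: int where "b' \<in> B" "b \<otimes> c [^] k = b' \<otimes> c [^] k'" "z = \<phi> b' \<otimes>\<^bsub>A\<^esub> a [^]\<^bsub>A\<^esub> k'"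
      by blast
    thus "z = \<phi> b \<otimes>\<^bsub>A\<^esub> a [^]\<^bsub>A\<^esub> k" using wd[OF b] by metis
  qed
  have mult_form: "(b \<otimes> c [^] k) \<otimes> (b' \<otimes> c [^] k') = (b \<otimes> (c [^] k \<otimes> b' \<otimes> inv (c [^] k))) \<otimes> c [^] (k + k')"
    if "b \<in> B" "b' \<in> B" for b b' and k k' :: int
    using that Bc c by (simp add: m_assoc int_pow_mult inv_cancel_l1)
  have inv_form: "inv (b \<otimes> c [^] k) = (inv (c [^] k) \<otimes> inv b \<otimes> inv (inv (c [^] k))) \<otimes> c [^] (- k)"
    if "b \<in> B" for b and k :: int
    using that Bc c by (simp add: m_assoc int_pow_neg inv_mult_group)
  have sub2: "subgroup B2 G"
  proof (rule subgroupI)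
    show "B2 \<subseteq> carrier G" unfolding B2_def using Bc c by auto
    show "B2 \<noteq> {}" unfolding B2_def using subgroup.one_closed[OF B] by blast
  next
    fix x assume "x \<in> B2"
    then obtain b k where bk: "b \<in> B" "x = b \<otimes> c [^] (k::int)" unfolding B2_def by blast
    have "inv (c [^] k) \<otimes> inv b \<otimes> inv (inv (c [^] k)) \<in> B"
      using conj[of "inv (c [^] k)" "inv b"] bk c B by (simp add: subgroup.m_inv_closed)
    thus "inv x \<in> B2" unfolding B2_def using inv_form[OF bk(1)] bk(2) by blast
  next
    fix x y assume "x \<in> B2" "y \<in> B2"
    then obtain b k b' k' where bk: "b \<in> B" "x = b \<otimes> c [^] (k::int)" "b' \<in> B" "y = b' \<otimes> c [^] (k'::int)"
      unfolding B2_def by blast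
    have "b \<otimes> (c [^] k \<otimes> b' \<otimes> inv (c [^] k)) \<in> B"
      using conj[of "c [^] k" b'] bk c B by (simp add: subgroup.m_closed)
    thus "x \<otimes> y \<in> B2" unfolding B2_def using mult_form[OF bk(1,3)] bk by blast
  qed
  have hom2: "\<phi>2 \<in> hom (G\<lparr>carrier := B2\<rparr>) A"
  proof (rule homI)
    fix x assume "x \<in> carrier (G\<lparr>carrier := B2\<rparr>)"
    then obtain b k where bk: "b \<in> B" "x = b \<otimes> c [^] (k::int)" unfolding B2_def by auto
    show "\<phi>2 x \<in> carrier A" using bk p2eq pc a by simp
  next
    fix x y assume "x \<in> carrier (G\<lparr>carrier := B2\<rparr>)" "y \<in> carrier (G\<lparr>carrier := B2\<rparr>)"
    then obtain b k b' k' where bk: "b \<in> B" "x = b \<otimes> c [^] (k::int)" "b' \<in> B" "y = b' \<otimes> c [^] (k'::int)"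
      unfolding B2_def by auto
    have cj: "c [^] k \<otimes> b' \<otimes> inv (c [^] k) \<in> B" "\<phi> (c [^] k \<otimes> b' \<otimes> inv (c [^] k)) = \<phi> b'"
      using conj[of "c [^] k" b'] bk c by auto
    have "\<phi>2 (x \<otimes>\<^bsub>G\<lparr>carrier := B2\<rparr>\<^esub> y) = \<phi>2 ((b \<otimes> (c [^] k \<otimes> b' \<otimes> inv (c [^] k))) \<otimes> c [^] (k + k'))"
      using mult_form[OF bk(1,3)] bk by simp
    also have "\<dots> = (\<phi> b \<otimes>\<^bsub>A\<^esub> \<phi> b') \<otimes>\<^bsub>A\<^esub> (a [^]\<^bsub>A\<^esub> k \<otimes>\<^bsub>A\<^esub> a [^]\<^bsub>A\<^esub> k')"
      using p2eq[of "b \<otimes> (c [^] k \<otimes> b' \<otimes> inv (c [^] k))" "k + k'"] cj bk pm a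
      by (simp add: subgroup.m_closed[OF B] A.int_pow_mult)
    also have "\<dots> = (\<phi> b \<otimes>\<^bsub>A\<^esub> a [^]\<^bsub>A\<^esub> k) \<otimes>\<^bsub>A\<^esub> (\<phi> b' \<otimes>\<^bsub>A\<^esub> a [^]\<^bsub>A\<^esub> k')"
      using pc bk a by (simp add: A.m_ac)
    also have "\<dots> = \<phi>2 x \<otimes>\<^bsub>A\<^esub> \<phi>2 y" using p2eq bk by simp
    finally show "\<phi>2 (x \<otimes>\<^bsub>G\<lparr>carrier := B2\<rparr>\<^esub> y) = \<phi>2 x \<otimes>\<^bsub>A\<^esub> \<phi>2 y" .
  qed
  have ext: "\<forall>b\<in>B. \<phi>2 b = \<phi> b"
  proof
    fix b assume b: "b \<in> B"
    have "\<phi>2 b = \<phi>2 (b \<otimes> c [^] (0::int))" using b Bc by simp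
    thus "\<phi>2 b = \<phi> b" using p2eq[OF b, of 0] pc[OF b] by simp
  qed
  have BB2: "B \<subseteq> B2"
  proof
    fix b assume "b \<in> B" thus "b \<in> B2" unfolding B2_def using Bc by (intro CollectI bexI[of _ b] exI[of _ 0]) auto
  qed
  have cB2: "c \<in> B2" unfolding B2_def using c subgroup.one_closed[OF B]
    by (intro CollectI bexI[of _ \<one>] exI[of _ 1]) auto
  have "\<phi>2 c = \<phi>2 (\<one> \<otimes> c [^] (1::int))" using c by simp
  hence "\<phi>2 c = a" using p2eq[OF subgroup.one_closed[OF B], of 1] p1 a by simp
  thus ?thesis using sub2 BB2 cB2 hom2 ext by blast
qed


lemma (in group) ext_E2:
  assumes fin: "finite (carrier G)" and A: "comm_group A" and hyp: "satisfies_hypothesis A \<pi>"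
    and pin: "pinum \<pi> (order G)"
  shows "subgroup B G \<Longrightarrow> derived G (carrier G) \<subseteq> B \<Longrightarrow> \<phi> \<in> hom (G\<lparr>carrier := B\<rparr>) A \<Longrightarrow>
    \<forall>d\<in>derived G (carrier G). \<phi> d = \<one>\<^bsub>A\<^esub> \<Longrightarrow> \<exists>\<Phi>\<in>hom G A. \<forall>b\<in>B. \<Phi> b = \<phi> b"
proof (induction "card (carrier G) - card B" arbitrary: B \<phi> rule: less_induct)
  case less
  note B = less.prems(1) and DB = less.prems(2) and phi = less.prems(3) and kill = less.prems(4)
  interpret A: comm_group A by fact
  have Bsub: "B \<subseteq> carrier G" using B subgroup.subset by blast
  show ?case
  proof (cases "B = carrier G")
    case True
    thus ?thesis using phi by auto
  next
    case False
    then obtain c where c: "c \<in> carrier G" "c \<notin> B" using Bsub by blast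
    obtain m where m0: "m > 0" and md: "\<forall>k::int. c [^] k \<in> B \<longleftrightarrow> int m dvd k"
      using least_pow_mem[OF fin B c(1)] by blast
    define n where "n = ord c"
    have "c [^] (int n) \<in> B" unfolding n_def using c(1) subgroup.one_closed[OF B] by (simp add: int_pow_int)
    hence mn: "m dvd n" using md by simp
    have pn: "pinum \<pi> n" unfolding n_def using pinum_dvd[OF pin ord_dvd_group_order[OF c(1)]] .
    have cmB: "c [^] m \<in> B" using md by (simp add: int_pow_int[symmetric])
    interpret P: group_hom "G\<lparr>carrier := B\<rparr>" A \<phi>
      using subgroup.subgroup_is_group[OF B is_group] A.is_group phi
      by (simp add: group_hom_def group_hom_axioms_def)
    have xc: "\<phi> (c [^] m) \<in> carrier A" using P.hom_closed cmB by simp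
    have "\<phi> (c [^] m) [^]\<^bsub>A\<^esub> (n div m) = \<phi> ((c [^] m) [^] (n div m))"
      using P.hom_nat_pow[of "c [^] m" "n div m"] cmB nat_pow_consistent by simp
    also have "(c [^] m) [^] (n div m) = c [^] n" using c(1) mn by (simp add: nat_pow_pow)
    also have "\<dots> = \<one>" unfolding n_def using c(1) by simp
    finally have xp: "\<phi> (c [^] m) [^]\<^bsub>A\<^esub> (n div m) = \<one>\<^bsub>A\<^esub>" using P.hom_one by simp
    obtain a where a: "a \<in> carrier A" "a [^]\<^bsub>A\<^esub> m = \<phi> (c [^] m)"
      using A.root_exists[OF hyp pn mn xc xp] by blast
    obtain B2 \<phi>2 where st: "subgroup B2 G" "B \<subseteq> B2" "c \<in> B2" "\<phi>2 \<in> hom (G\<lparr>carrier := B2\<rparr>) A"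
        "\<forall>b\<in>B. \<phi>2 b = \<phi> b"
      using step_ext[OF A B DB phi kill c(1) md a] by blast
    have B2sub: "B2 \<subseteq> carrier G" using st(1) subgroup.subset by blast
    have "B \<subset> B2" using st c by blast
    hence "card B < card B2" using finite_subset[OF B2sub fin] by (rule psubset_card_mono[rotated])
    moreover have "card B2 \<le> card (carrier G)" using B2sub fin by (rule card_mono[rotated])
    ultimately have lt: "card (carrier G) - card B2 < card (carrier G) - card B" by linarith
    have D2: "derived G (carrier G) \<subseteq> B2" using DB st(2) by blast
    have k2: "\<forall>d\<in>derived G (carrier G). \<phi>2 d = \<one>\<^bsub>A\<^esub>" using DB st(5) kill by auto
    obtain \<Phi> where Phi: "\<Phi> \<in> hom G A" "\<forall>b\<in>B2. \<Phi> b = \<phi>2 b"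
      using less.hyps[OF lt st(1) D2 st(4) k2] by blast
    have "\<forall>b\<in>B. \<Phi> b = \<phi> b" using Phi(2) st(2,5) by auto
    thus ?thesis using Phi(1) by blast
  qed
qed

lemma (in group) ext_E1:
  assumes A: "comm_group A" and B: "subgroup B G" and phi: "\<phi> \<in> hom (G\<lparr>carrier := B\<rparr>) A"
    and kill: "\<forall>d\<in>B \<inter> derived G (carrier G). \<phi> d = \<one>\<^bsub>A\<^esub>"
  shows "\<exists>B2 \<phi>2. subgroup B2 G \<and> B \<subseteq> B2 \<and> derived G (carrier G) \<subseteq> B2 \<and> \<phi>2 \<in> hom (G\<lparr>carrier := B2\<rparr>) A
           \<and> (\<forall>b\<in>B. \<phi>2 b = \<phi> b) \<and> (\<forall>d\<in>derived G (carrier G). \<phi>2 d = \<one>\<^bsub>A\<^esub>)"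
proof -
  interpret A: comm_group A by fact
  define D where "D = derived G (carrier G)"
  interpret N: normal D G unfolding D_def by (rule derived_self_is_normal)
  have Dsub: "subgroup D G" by (rule N.subgroup_axioms)
  have Dc: "\<And>x. x \<in> D \<Longrightarrow> x \<in> carrier G" using Dsub subgroup.subset by blast
  interpret P: group_hom "G\<lparr>carrier := B\<rparr>" A \<phi>
    using subgroup.subgroup_is_group[OF B is_group] A.is_group phi
    by (simp add: group_hom_def group_hom_axioms_def)
  have Bc: "\<And>x. x \<in> B \<Longrightarrow> x \<in> carrier G" using B subgroup.subset by blast
  have pm: "\<And>x y. x\<in>B \<Longrightarrow> y\<in>B \<Longrightarrow> \<phi> (x \<otimes> y) = \<phi> x \<otimes>\<^bsub>A\<^esub> \<phi> y"
    using P.hom_mult by simp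
  have pc: "\<And>x. x\<in>B \<Longrightarrow> \<phi> x \<in> carrier A" using P.hom_closed by simp
  have p1: "\<phi> \<one> = \<one>\<^bsub>A\<^esub>" using P.hom_one by simp
  have pinv: "\<And>x. x\<in>B \<Longrightarrow> \<phi> (inv x) = inv\<^bsub>A\<^esub> \<phi> x"
    using P.hom_inv m_inv_consistent[OF B] by simp
  have wd: "\<phi> b = \<phi> b'" if b: "b \<in> B" and b': "b' \<in> B" and d: "d \<in> D" and d': "d' \<in> D"
    and eq: "b \<otimes> d = b' \<otimes> d'" for b b' d d'
  proof -
    have "inv b' \<otimes> b = d' \<otimes> inv d"
      using eq b b' d d' Bc Dc by (metis inv_solve_left inv_solve_right' m_assoc inv_closed m_closed)
    moreover have "inv b' \<otimes> b \<in> B" using b b' B by (simp add: subgroup.m_closed subgroup.m_inv_closed)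
    moreover have "d' \<otimes> inv d \<in> D" using d d' Dsub by (simp add: subgroup.m_closed subgroup.m_inv_closed)
    ultimately have "\<phi> (inv b' \<otimes> b) = \<one>\<^bsub>A\<^esub>" using kill unfolding D_def by auto
    hence "inv\<^bsub>A\<^esub> \<phi> b' \<otimes>\<^bsub>A\<^esub> \<phi> b = \<one>\<^bsub>A\<^esub>" using pm pinv b b' B by (simp add: subgroup.m_inv_closed)
    thus ?thesis using pc b b' by (metis A.inv_solve_left' A.r_one A.one_closed)
  qed
  define B2 where "B2 = {x. \<exists>b\<in>B. \<exists>d\<in>D. x = b \<otimes> d}"
  define \<phi>2 where "\<phi>2 x = (SOME z. \<exists>b\<in>B. \<exists>d\<in>D. x = b \<otimes> d \<and> z = \<phi> b)" for x
  have p2eq: "\<phi>2 (b \<otimes> d) = \<phi> b" if b: "b \<in> B" and d: "d \<in> D" for b d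
    unfolding \<phi>2_def
  proof (rule someI2)
    show "\<exists>b'\<in>B. \<exists>d'\<in>D. b \<otimes> d = b' \<otimes> d' \<and> \<phi> b = \<phi> b'" using b d by blast
  next
    fix z assume "\<exists>b'\<in>B. \<exists>d'\<in>D. b \<otimes> d = b' \<otimes> d' \<and> z = \<phi> b'"
    thus "z = \<phi> b" using wd[OF b _ d] by metis
  qed
  have mult_form: "(b \<otimes> d) \<otimes> (b' \<otimes> d') = (b \<otimes> b') \<otimes> ((inv b' \<otimes> d \<otimes> b') \<otimes> d')"
    if "b \<in> B" "b' \<in> B" "d \<in> D" "d' \<in> D" for b b' d d'
    using that Bc Dc by (simp add: m_assoc inv_cancel_l2)
  have inv_form: "inv (b \<otimes> d) = inv b \<otimes> (b \<otimes> inv d \<otimes> inv b)"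
    if "b \<in> B" "d \<in> D" for b d
    using that Bc Dc by (simp add: m_assoc inv_mult_group inv_cancel_l1)
  have sub2: "subgroup B2 G"
  proof (rule subgroupI)
    show "B2 \<subseteq> carrier G" unfolding B2_def using Bc Dc by auto
    show "B2 \<noteq> {}" unfolding B2_def using subgroup.one_closed[OF B] subgroup.one_closed[OF Dsub] by blast
  next
    fix x assume "x \<in> B2"
    then obtain b d where bk: "b \<in> B" "d \<in> D" "x = b \<otimes> d" unfolding B2_def by blast
    have "b \<otimes> inv d \<otimes> inv b \<in> D"
      using N.inv_op_closed2[of b "inv d"] bk Bc Dsub by (simp add: subgroup.m_inv_closed)
    moreover have "inv b \<in> B" using bk B by (simp add: subgroup.m_inv_closed)
    ultimately show "inv x \<in> B2" unfolding B2_def using inv_form[OF bk(1,2)] bk(3) by blast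
  next
    fix x y assume "x \<in> B2" "y \<in> B2"
    then obtain b d b' d' where bk: "b \<in> B" "d \<in> D" "x = b \<otimes> d" "b' \<in> B" "d' \<in> D" "y = b' \<otimes> d'"
      unfolding B2_def by blast
    have "(inv b' \<otimes> d \<otimes> b') \<otimes> d' \<in> D"
      using N.inv_op_closed1[of b' d] bk Bc Dsub by (simp add: subgroup.m_closed)
    moreover have "b \<otimes> b' \<in> B" using bk B by (simp add: subgroup.m_closed)
    ultimately show "x \<otimes> y \<in> B2" unfolding B2_def using mult_form[OF bk(1,4,2,5)] bk by blast
  qed
  have hom2: "\<phi>2 \<in> hom (G\<lparr>carrier := B2\<rparr>) A"
  proof (rule homI)
    fix x assume "x \<in> carrier (G\<lparr>carrier := B2\<rparr>)"
    then obtain b d where bk: "b \<in> B" "d \<in> D" "x = b \<otimes> d" unfolding B2_def by auto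
    show "\<phi>2 x \<in> carrier A" using bk p2eq pc by simp
  next
    fix x y assume "x \<in> carrier (G\<lparr>carrier := B2\<rparr>)" "y \<in> carrier (G\<lparr>carrier := B2\<rparr>)"
    then obtain b d b' d' where bk: "b \<in> B" "d \<in> D" "x = b \<otimes> d" "b' \<in> B" "d' \<in> D" "y = b' \<otimes> d'"
      unfolding B2_def by auto
    have "(inv b' \<otimes> d \<otimes> b') \<otimes> d' \<in> D"
      using N.inv_op_closed1[of b' d] bk Bc Dsub by (simp add: subgroup.m_closed)
    moreover have "b \<otimes> b' \<in> B" using bk B by (simp add: subgroup.m_closed)
    ultimately have "\<phi>2 (x \<otimes> y) = \<phi> (b \<otimes> b')"
      using mult_form[OF bk(1,4,2,5)] bk p2eq by simp
    thus "\<phi>2 (x \<otimes>\<^bsub>G\<lparr>carrier := B2\<rparr>\<^esub> y) = \<phi>2 x \<otimes>\<^bsub>A\<^esub> \<phi>2 y"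
      using pm bk p2eq by simp
  qed
  have ext: "\<forall>b\<in>B. \<phi>2 b = \<phi> b"
  proof
    fix b assume b: "b \<in> B"
    have "\<phi>2 b = \<phi>2 (b \<otimes> \<one>)" using b Bc by simp
    thus "\<phi>2 b = \<phi> b" using p2eq[OF b subgroup.one_closed[OF Dsub]] by simp
  qed
  have killD: "\<forall>d\<in>D. \<phi>2 d = \<one>\<^bsub>A\<^esub>"
  proof
    fix d assume d: "d \<in> D"
    have "\<phi>2 d = \<phi>2 (\<one> \<otimes> d)" using d Dc by simp
    thus "\<phi>2 d = \<one>\<^bsub>A\<^esub>" using p2eq[OF subgroup.one_closed[OF B] d] p1 by simp
  qed
  have BB2: "B \<subseteq> B2"
  proof
    fix b assume "b \<in> B" thus "b \<in> B2" unfolding B2_def using Bc subgroup.one_closed[OF Dsub]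
      by (intro CollectI bexI[of _ b] bexI[of _ \<one>]) auto
  qed
  have DB2: "D \<subseteq> B2"
  proof
    fix d assume "d \<in> D" thus "d \<in> B2" unfolding B2_def using Dc subgroup.one_closed[OF B]
      by (intro CollectI bexI[of _ \<one>] bexI[of _ d]) auto
  qed
  show ?thesis using sub2 BB2 DB2 hom2 ext killD unfolding D_def by blast
qed

lemma (in group) extension:
  assumes fin: "finite (carrier G)" and A: "comm_group A" and hyp: "satisfies_hypothesis A \<pi>"
    and pin: "pinum \<pi> (order G)"
    and B: "subgroup B G" and phi: "\<phi> \<in> hom (G\<lparr>carrier := B\<rparr>) A"
    and kill: "\<forall>d\<in>B \<inter> derived G (carrier G). \<phi> d = \<one>\<^bsub>A\<^esub>"
  shows "\<exists>\<Phi>\<in>hom G A. \<forall>b\<in>B. \<Phi> b = \<phi> b"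
proof -
  obtain B2 \<phi>2 where st: "subgroup B2 G" "B \<subseteq> B2" "derived G (carrier G) \<subseteq> B2"
      "\<phi>2 \<in> hom (G\<lparr>carrier := B2\<rparr>) A" "\<forall>b\<in>B. \<phi>2 b = \<phi> b" "\<forall>d\<in>derived G (carrier G). \<phi>2 d = \<one>\<^bsub>A\<^esub>"
    using ext_E1[OF A B phi kill] by blast
  obtain \<Phi> where Phi: "\<Phi> \<in> hom G A" "\<forall>b\<in>B2. \<Phi> b = \<phi>2 b"
    using ext_E2[OF fin A hyp pin st(1,3,4,6)] by blast
  have "\<forall>b\<in>B. \<Phi> b = \<phi> b" using Phi(2) st(2,5) by auto
  thus ?thesis using Phi(1) by blast
qed

lemma (in group) separation:
  assumes fin: "finite (carrier G)" and A: "comm_group A" and hyp: "satisfies_hypothesis A \<pi>"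
    and pin: "pinum \<pi> (order G)"
    and u: "u \<in> carrier G" "u \<notin> derived G (carrier G)"
  shows "\<exists>f\<in>hom G A. f u \<noteq> \<one>\<^bsub>A\<^esub>"
proof -
  interpret A: comm_group A by fact
  define D where "D = derived G (carrier G)"
  have Dsub: "subgroup D G" unfolding D_def by (rule derived_is_subgroup) simp
  obtain m where m0: "m > 0" and md: "\<forall>k::int. u [^] k \<in> D \<longleftrightarrow> int m dvd k"
    using least_pow_mem[OF fin Dsub u(1)] by blast
  have "u [^] (int (ord u)) \<in> D" using u(1) subgroup.one_closed[OF Dsub] by (simp add: int_pow_int)
  hence mn: "m dvd ord u" using md by simp
  have pm: "pinum \<pi> m" using pinum_dvd[OF pin dvd_trans[OF mn ord_dvd_group_order[OF u(1)]]] .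
  have "\<not> int m dvd 1" using md u unfolding D_def by (metis int_pow_1)
  hence m1: "m > 1" using m0 by (cases "m = 1") auto
  obtain a where a: "a \<in> carrier A" "a [^]\<^bsub>A\<^esub> m = \<one>\<^bsub>A\<^esub>" "a \<noteq> \<one>\<^bsub>A\<^esub>"
    using A.nontrivial_root[OF hyp pm m1] by blast
  have triv: "(\<lambda>_. \<one>\<^bsub>A\<^esub>) \<in> hom (G\<lparr>carrier := D\<rparr>) A" by (rule homI) auto
  obtain B2 \<phi>2 where st: "subgroup B2 G" "D \<subseteq> B2" "u \<in> B2" "\<phi>2 \<in> hom (G\<lparr>carrier := B2\<rparr>) A"
      "\<forall>b\<in>D. \<phi>2 b = \<one>\<^bsub>A\<^esub>" "\<phi>2 u = a"
    using step_ext[OF A Dsub _ triv _ u(1) md a(1)] a(2) unfolding D_def by auto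
  have D2: "derived G (carrier G) \<subseteq> B2" using st(2) unfolding D_def .
  have k2: "\<forall>d\<in>derived G (carrier G). \<phi>2 d = \<one>\<^bsub>A\<^esub>" using st(5) unfolding D_def .
  obtain \<Phi> where Phi: "\<Phi> \<in> hom G A" "\<forall>b\<in>B2. \<Phi> b = \<phi>2 b"
    using ext_E2[OF fin A hyp pin st(1) D2 st(4) k2] by blast
  have "\<Phi> u \<noteq> \<one>\<^bsub>A\<^esub>" using Phi(2) st(3,6) a(3) by auto
  thus ?thesis using Phi(1) by blast
qed


theorem theorem3p2:
  fixes G :: "('a, 'c) monoid_scheme" and H :: "('b, 'd) monoid_scheme"
    and A :: "('e, 'f) monoid_scheme" and U :: "('a \<times> 'b) set" and \<pi> :: "nat set"
  assumes "group G" and "group H" and "finite (carrier G)" and "finite (carrier H)"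
    and "subdirect G H U"
    and "comm_group A" and "satisfies_hypothesis A \<pi>"
    and "\<And>p::nat. Factorial_Ring.prime p \<Longrightarrow> p dvd order G \<Longrightarrow> p \<in> \<pi>"
    and "\<And>p::nat. Factorial_Ring.prime p \<Longrightarrow> p dvd order H \<Longrightarrow> p \<in> \<pi>"
  shows "(restriction_surjective G H U A \<longleftrightarrow>
           derived G (carrier G) \<inter> k1 H U
             = k1 H (derived ((G \<times>\<times> H)\<lparr>carrier := U\<rparr>) U))
       \<and> (restriction_surjective G H U A \<longleftrightarrow>
           derived H (carrier H) \<inter> k2 G U
             = k2 G (derived ((G \<times>\<times> H)\<lparr>carrier := U\<rparr>) U))"
proof -
  note gG = assms(1) and gH = assms(2) and finG = assms(3) and finH = assms(4)
    and sd = assms(5) and A = assms(6) and hyp = assms(7) and pG = assms(8) and pH = assms(9)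
  interpret G: group G by fact
  interpret H: group H by fact
  define GH where "GH = G \<times>\<times> H"
  define UG where "UG = GH\<lparr>carrier := U\<rparr>"
  define DU where "DU = derived UG U"
  define DGH where "DGH = derived GH (carrier GH)"
  have gGH: "group GH" unfolding GH_def using DirProd_group[OF gG gH] .
  interpret GH: group GH by fact
  have Usub: "subgroup U GH" using sd unfolding subdirect_def GH_def by simp
  have fstU: "fst ` U = carrier G" and sndU: "snd ` U = carrier H" using sd unfolding subdirect_def by auto
  have cGH: "carrier GH = carrier G \<times> carrier H" unfolding GH_def by simp
  have Uc: "U \<subseteq> carrier G \<times> carrier H" using subgroup.subset[OF Usub] cGH by simp
  have gUG: "group UG" unfolding UG_def using subgroup.subgroup_is_group[OF Usub gGH] .
  interpret UG: group UG by fact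
  have cUG: "carrier UG = U" unfolding UG_def by simp
  have mUG: "\<And>x y. x \<otimes>\<^bsub>UG\<^esub> y = x \<otimes>\<^bsub>GH\<^esub> y" unfolding UG_def by simp
  have finGH: "finite (carrier GH)" using cGH finG finH by simp
  have finU: "finite U" using Uc finG finH finite_subset by blast
  have oGH: "order GH = order G * order H" unfolding order_def cGH by (simp add: card_cartesian_product)
  have pinGH: "pinum \<pi> (order GH)"
    unfolding pinum_def
  proof (intro conjI allI impI)
    show "order GH > 0" using finGH GH.order_gt_0_iff_finite by simp
    fix p :: nat assume "Factorial_Ring.prime p" "p dvd order GH"
    thus "p \<in> \<pi>" using oGH pG pH by (auto simp: prime_dvd_mult_iff)
  qed
  have "card (rcosets\<^bsub>GH\<^esub> U) * card U = order GH" using GH.lagrange[OF Usub] .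
  hence "order UG dvd order GH" unfolding order_def cUG by (metis dvd_triv_right)
  hence pinU: "pinum \<pi> (order UG)" using pinum_dvd[OF pinGH] by blast
  have finUG: "finite (carrier UG)" using finU cUG by simp
  have DUd: "derived UG (carrier UG) = DU" unfolding DU_def cUG ..
  have C1: "restriction_surjective G H U A \<longleftrightarrow> U \<inter> DGH \<subseteq> DU"
  proof
    assume S: "restriction_surjective G H U A"
    show "U \<inter> DGH \<subseteq> DU"
    proof (rule ccontr)
      assume "\<not> U \<inter> DGH \<subseteq> DU"
      then obtain x where x: "x \<in> U" "x \<in> DGH" "x \<notin> DU" by blast
      obtain f where f: "f \<in> hom UG A" "f x \<noteq> \<one>\<^bsub>A\<^esub>"
        using UG.separation[OF finUG A hyp pinU, of x] x cUG DUd by auto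
      obtain F where F: "F \<in> hom GH A" "\<forall>u\<in>U. F u = f u"
        using S f(1) unfolding restriction_surjective_def GH_def UG_def by blast
      have "F x = \<one>\<^bsub>A\<^esub>" using hom_kills_derived[OF gGH A F(1)] x(2) unfolding DGH_def by blast
      thus False using F(2) x(1) f(2) by auto
    qed
  next
    assume inc: "U \<inter> DGH \<subseteq> DU"
    show "restriction_surjective G H U A"
      unfolding restriction_surjective_def
    proof
      fix f assume f: "f \<in> hom ((G \<times>\<times> H)\<lparr>carrier := U\<rparr>) A"
      hence f': "f \<in> hom (GH\<lparr>carrier := U\<rparr>) A" unfolding GH_def .
      have kill: "\<forall>d\<in>U \<inter> derived GH (carrier GH). f d = \<one>\<^bsub>A\<^esub>"
      proof
        fix d assume "d \<in> U \<inter> derived GH (carrier GH)"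
        hence "d \<in> derived UG (carrier UG)" using inc DUd unfolding DGH_def by auto
        thus "f d = \<one>\<^bsub>A\<^esub>" using hom_kills_derived[OF gUG A] f' unfolding UG_def by blast
      qed
      show "\<exists>F\<in>hom (G \<times>\<times> H) A. \<forall>u\<in>U. F u = f u"
        using GH.extension[OF finGH A hyp pinGH Usub f' kill] unfolding GH_def .
    qed
  qed
  have fst_hom: "group_hom UG G fst"
  proof -
    have "fst \<in> hom UG G"
      by (rule homI) (use Uc cUG in \<open>auto simp: mUG GH_def mult_DirProd'\<close>)
    thus ?thesis using gUG gG by (simp add: group_hom_def group_hom_axioms_def)
  qed
  have snd_hom: "group_hom UG H snd"
  proof -
    have "snd \<in> hom UG H"
      by (rule homI) (use Uc cUG in \<open>auto simp: mUG GH_def mult_DirProd'\<close>)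
    thus ?thesis using gUG gH by (simp add: group_hom_def group_hom_axioms_def)
  qed
  have F2a: "fst ` DU = derived G (carrier G)"
    using derived_img[OF fst_hom, of U] cUG fstU unfolding DU_def by simp
  have F2b: "snd ` DU = derived H (carrier H)"
    using derived_img[OF snd_hom, of U] cUG sndU unfolding DU_def by simp
  have fst_hom2: "group_hom GH G fst"
  proof -
    have "fst \<in> hom GH G"
      by (rule homI) (auto simp: GH_def mult_DirProd')
    thus ?thesis using gGH gG by (simp add: group_hom_def group_hom_axioms_def)
  qed
  have snd_hom2: "group_hom GH H snd"
  proof -
    have "snd \<in> hom GH H"
      by (rule homI) (auto simp: GH_def mult_DirProd')
    thus ?thesis using gGH gH by (simp add: group_hom_def group_hom_axioms_def)
  qed
  have F3a: "\<And>x. x \<in> DGH \<Longrightarrow> fst x \<in> derived G (carrier G)"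
  proof -
    fix x assume "x \<in> DGH"
    hence "fst x \<in> derived G (fst ` carrier GH)"
      using derived_img[OF fst_hom2, of "carrier GH"] unfolding DGH_def by auto
    moreover have "fst ` carrier GH = carrier G" unfolding cGH using H.one_closed by force
    ultimately show "fst x \<in> derived G (carrier G)" by simp
  qed
  have F3b: "\<And>x. x \<in> DGH \<Longrightarrow> snd x \<in> derived H (carrier H)"
  proof -
    fix x assume "x \<in> DGH"
    hence "snd x \<in> derived H (snd ` carrier GH)"
      using derived_img[OF snd_hom2, of "carrier GH"] unfolding DGH_def by auto
    moreover have "snd ` carrier GH = carrier H" unfolding cGH using G.one_closed by force
    ultimately show "snd x \<in> derived H (carrier H)" by simp
  qed
  have F4a: "\<And>g. g \<in> derived G (carrier G) \<Longrightarrow> (g, \<one>\<^bsub>H\<^esub>) \<in> DGH"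
  proof -
    fix g assume g: "g \<in> derived G (carrier G)"
    have "(\<lambda>g. (g, \<one>\<^bsub>H\<^esub>)) \<in> hom G GH" by (rule homI) (auto simp: GH_def)
    hence ih: "group_hom G GH (\<lambda>g. (g, \<one>\<^bsub>H\<^esub>))" using gGH gG by (simp add: group_hom_def group_hom_axioms_def)
    have "(g, \<one>\<^bsub>H\<^esub>) \<in> derived GH ((\<lambda>g. (g, \<one>\<^bsub>H\<^esub>)) ` carrier G)"
      using derived_img[OF ih, of "carrier G"] g by auto
    moreover have "(\<lambda>g. (g, \<one>\<^bsub>H\<^esub>)) ` carrier G \<subseteq> carrier GH" unfolding cGH by auto
    ultimately show "(g, \<one>\<^bsub>H\<^esub>) \<in> DGH" unfolding DGH_def using GH.mono_derived by blast
  qed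
  have F4b: "\<And>h. h \<in> derived H (carrier H) \<Longrightarrow> (\<one>\<^bsub>G\<^esub>, h) \<in> DGH"
  proof -
    fix h assume h: "h \<in> derived H (carrier H)"
    have "(\<lambda>h. (\<one>\<^bsub>G\<^esub>, h)) \<in> hom H GH" by (rule homI) (auto simp: GH_def)
    hence ih: "group_hom H GH (\<lambda>h. (\<one>\<^bsub>G\<^esub>, h))" using gGH gH by (simp add: group_hom_def group_hom_axioms_def)
    have "(\<one>\<^bsub>G\<^esub>, h) \<in> derived GH ((\<lambda>h. (\<one>\<^bsub>G\<^esub>, h)) ` carrier H)"
      using derived_img[OF ih, of "carrier H"] h by auto
    moreover have "(\<lambda>h. (\<one>\<^bsub>G\<^esub>, h)) ` carrier H \<subseteq> carrier GH" unfolding cGH by auto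
    ultimately show "(\<one>\<^bsub>G\<^esub>, h) \<in> DGH" unfolding DGH_def using GH.mono_derived by blast
  qed
  have DUU: "DU \<subseteq> U" using UG.derived_in_carrier[of "carrier UG"] DUd cUG by simp
  have DUsub: "subgroup DU UG" using UG.derived_is_subgroup[of "carrier UG"] DUd by simp
  have DUm: "\<And>x y. x \<in> DU \<Longrightarrow> y \<in> DU \<Longrightarrow> x \<otimes>\<^bsub>GH\<^esub> y \<in> DU"
    using subgroup.m_closed[OF DUsub] mUG by metis
  have Um: "\<And>x y. x \<in> U \<Longrightarrow> y \<in> U \<Longrightarrow> x \<otimes>\<^bsub>GH\<^esub> y \<in> U" using subgroup.m_closed[OF Usub] by blast
  have Ui: "\<And>x. x \<in> U \<Longrightarrow> inv\<^bsub>GH\<^esub> x \<in> U" using subgroup.m_inv_closed[OF Usub] by blast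
  have DGsub: "subgroup (derived G (carrier G)) G" by (rule G.derived_is_subgroup) simp
  have DHsub: "subgroup (derived H (carrier H)) H" by (rule H.derived_is_subgroup) simp
  have C2a: "U \<inter> DGH \<subseteq> DU \<longleftrightarrow> derived G (carrier G) \<inter> k1 H U = k1 H DU"
  proof
    assume inc: "U \<inter> DGH \<subseteq> DU"
    show "derived G (carrier G) \<inter> k1 H U = k1 H DU"
    proof
      show "derived G (carrier G) \<inter> k1 H U \<subseteq> k1 H DU"
        using inc F4a unfolding k1_def by blast
      show "k1 H DU \<subseteq> derived G (carrier G) \<inter> k1 H U"
        using DUU F2a unfolding k1_def by force
    qed
  next
    assume eq: "derived G (carrier G) \<inter> k1 H U = k1 H DU"
    show "U \<inter> DGH \<subseteq> DU"
    proof
      fix x assume x: "x \<in> U \<inter> DGH"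
      obtain g h where gh: "x = (g, h)" by force
      have g: "g \<in> derived G (carrier G)" using F3a x gh by auto
      have h: "h \<in> derived H (carrier H)" using F3b x gh by auto
      obtain g0 where g0: "(g0, h) \<in> DU" using h F2b by force
      have g0U: "(g0, h) \<in> U" using g0 DUU by blast
      have g0d: "g0 \<in> derived G (carrier G)" using g0 F2a by force
      have gc: "g \<in> carrier G" "h \<in> carrier H" using x gh Uc by auto
      have g0c: "g0 \<in> carrier G" using g0U Uc by auto
      have "(g, h) \<otimes>\<^bsub>GH\<^esub> inv\<^bsub>GH\<^esub> (g0, h) \<in> U" using Um Ui x gh g0U by auto
      hence "(g \<otimes>\<^bsub>G\<^esub> inv\<^bsub>G\<^esub> g0, \<one>\<^bsub>H\<^esub>) \<in> U" using gc g0c unfolding GH_def by (simp add: gG gH)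
      moreover have "g \<otimes>\<^bsub>G\<^esub> inv\<^bsub>G\<^esub> g0 \<in> derived G (carrier G)"
        using g g0d DGsub by (simp add: subgroup.m_closed subgroup.m_inv_closed)
      ultimately have "g \<otimes>\<^bsub>G\<^esub> inv\<^bsub>G\<^esub> g0 \<in> k1 H DU" using eq unfolding k1_def by blast
      hence y: "(g \<otimes>\<^bsub>G\<^esub> inv\<^bsub>G\<^esub> g0, \<one>\<^bsub>H\<^esub>) \<in> DU" unfolding k1_def by simp
      have "(g \<otimes>\<^bsub>G\<^esub> inv\<^bsub>G\<^esub> g0, \<one>\<^bsub>H\<^esub>) \<otimes>\<^bsub>GH\<^esub> (g0, h) = (g, h)"
        using gc g0c unfolding GH_def by (simp add: G.m_assoc)
      thus "x \<in> DU" using DUm[OF y g0] gh by simp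
    qed
  qed
  have C2b: "U \<inter> DGH \<subseteq> DU \<longleftrightarrow> derived H (carrier H) \<inter> k2 G U = k2 G DU"
  proof
    assume inc: "U \<inter> DGH \<subseteq> DU"
    show "derived H (carrier H) \<inter> k2 G U = k2 G DU"
    proof
      show "derived H (carrier H) \<inter> k2 G U \<subseteq> k2 G DU"
        using inc F4b unfolding k2_def by blast
      show "k2 G DU \<subseteq> derived H (carrier H) \<inter> k2 G U"
        using DUU F2b unfolding k2_def by force
    qed
  next
    assume eq: "derived H (carrier H) \<inter> k2 G U = k2 G DU"
    show "U \<inter> DGH \<subseteq> DU"
    proof
      fix x assume x: "x \<in> U \<inter> DGH"
      obtain g h where gh: "x = (g, h)" by force
      have g: "g \<in> derived G (carrier G)" using F3a x gh by auto
      have h: "h \<in> derived H (carrier H)" using F3b x gh by auto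
      obtain h0 where h0: "(g, h0) \<in> DU" using g F2a by force
      have h0U: "(g, h0) \<in> U" using h0 DUU by blast
      have h0d: "h0 \<in> derived H (carrier H)" using h0 F2b by force
      have gc: "g \<in> carrier G" "h \<in> carrier H" using x gh Uc by auto
      have h0c: "h0 \<in> carrier H" using h0U Uc by auto
      have "inv\<^bsub>GH\<^esub> (g, h0) \<otimes>\<^bsub>GH\<^esub> (g, h) \<in> U" using Um Ui x gh h0U by auto
      hence "(\<one>\<^bsub>G\<^esub>, inv\<^bsub>H\<^esub> h0 \<otimes>\<^bsub>H\<^esub> h) \<in> U" using gc h0c unfolding GH_def by (simp add: gG gH)
      moreover have "inv\<^bsub>H\<^esub> h0 \<otimes>\<^bsub>H\<^esub> h \<in> derived H (carrier H)"
        using h h0d DHsub by (simp add: subgroup.m_closed subgroup.m_inv_closed)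
      ultimately have "inv\<^bsub>H\<^esub> h0 \<otimes>\<^bsub>H\<^esub> h \<in> k2 G DU" using eq unfolding k2_def by blast
      hence y: "(\<one>\<^bsub>G\<^esub>, inv\<^bsub>H\<^esub> h0 \<otimes>\<^bsub>H\<^esub> h) \<in> DU" unfolding k2_def by simp
      have "(g, h0) \<otimes>\<^bsub>GH\<^esub> (\<one>\<^bsub>G\<^esub>, inv\<^bsub>H\<^esub> h0 \<otimes>\<^bsub>H\<^esub> h) = (g, h)"
        using gc h0c unfolding GH_def by (simp add: H.m_assoc[symmetric])
      thus "x \<in> DU" using DUm[OF h0 y] gh by simp
    qed
  qed
  show ?thesis using C1 C2a C2b unfolding DU_def UG_def GH_def by blast
qed

end
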